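(* Under the standing assumptions, let $\rho_{k+1}\ge\rho_k>0$ and $\sigma_k\ge\sigma_{k+1}>0$. Then for every $x\in X$, $$\|y^*_{\rho_{k+1},\sigma_{k+1}}(x)-y^*_{\rho_k,\sigma_k}(x)\|\le\frac{\rho_{k+1}-\rho_k}{\sigma_k}M^2+\frac{\sigma_k-\sigma_{k+1}}{\sigma_k}M .$$
   Context: Standing assumptions: $X\subset\mathbb{R}^n$, $Y\subset\mathbb{R}^m$ nonempty, convex, compact; $f$ continuously differentiable with Lipschitz gradient on $X\times Y$, $f(x,\cdot)$ concave on $Y$; $c=(c_1,\dots,c_p)$ with continuously differentiable components having Lipschitz gradients, each $c_i(x,\cdot)$ convex on $Y$. Notation: $[z]_+=\max\{z,0\}$ componentwise; $\psi_{\rho,\sigma}(x,y):=f(x,y)-\frac{\rho}{2}\|[c(x,y)]_+\|^2-\frac{\sigma}{2}\|y\|^2$; $y^*_{\rho,\sigma}(x)$ is the unique maximizer of $\psi_{\rho,\sigma}(x,\cdot)$ over $Y$. $M$ is any constant with $M\ge\sup_{X\times Y}\|c(x,y)\|$, $M\ge\sup_{X\times Y}\|\nabla c(x,y)\|$ (operator norm of the Jacobian of $c$) and $M\ge\sup_{y\in Y}\|y\|$. *)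

theory Defs
  imports "HOL-Analysis.Analysis"
begin

definition pos_part :: "real^'p \<Rightarrow> real^'p" where
  "pos_part v = (\<chi> i. max (v $ i) 0)"

definition psi ::
  "(real^'n \<Rightarrow> real^'m \<Rightarrow> real) \<Rightarrow> (real^'n \<Rightarrow> real^'m \<Rightarrow> real^'p)
   \<Rightarrow> real \<Rightarrow> real \<Rightarrow> real^'n \<Rightarrow> real^'m \<Rightarrow> real" where
  "psi f c \<rho> \<sigma> x y = f x y - \<rho> / 2 * (norm (pos_part (c x y)))\<^sup>2 - \<sigma> / 2 * (norm y)\<^sup>2"

definition ystar ::
  "(real^'m) set \<Rightarrow> (real^'n \<Rightarrow> real^'m \<Rightarrow> real) \<Rightarrow> (real^'n \<Rightarrow> real^'m \<Rightarrow> real^'p)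
   \<Rightarrow> real \<Rightarrow> real \<Rightarrow> real^'n \<Rightarrow> real^'m" where
  "ystar Y f c \<rho> \<sigma> x = (THE y. y \<in> Y \<and> (\<forall>z\<in>Y. psi f c \<rho> \<sigma> x z \<le> psi f c \<rho> \<sigma> x y))"

end

theory Submission
  imports Defs
begin

lemma lim_arg:
  fixes A B :: real
  assumes "\<And>s. 0 < s \<Longrightarrow> s \<le> 1 \<Longrightarrow> A * (1 - s) \<le> B"
  shows "A \<le> B"
proof (rule ccontr)
  assume "\<not> A \<le> B"
  have "0 \<le> B" using assms[of 1] by simp
  with \<open>\<not> A \<le> B\<close> have A: "A > 0" "A > B" by auto
  define s where "s = (A - B) / (2 * A)"
  have "0 < s" "s \<le> 1" using A \<open>0 \<le> B\<close> by (auto simp: s_def field_simps)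
  then have "A * (1 - s) \<le> B" by (rule assms)
  moreover have "A * (1 - s) = (A + B) / 2" using A by (simp add: s_def field_simps)
  ultimately show False using A by simp
qed

lemma abstract_bound:
  fixes h0 \<phi> :: "'a::real_inner \<Rightarrow> real"
  assumes Y: "convex Y" and y0: "y0 \<in> Y" and y1: "y1 \<in> Y"
    and opt0: "\<And>z. z \<in> Y \<Longrightarrow> h0 z \<le> h0 y0"
    and opt1: "\<And>z. z \<in> Y \<Longrightarrow> h0 z + \<phi> z \<le> h0 y1 + \<phi> y1"
    and strong: "\<And>u v t. u \<in> Y \<Longrightarrow> v \<in> Y \<Longrightarrow> 0 \<le> t \<Longrightarrow> t \<le> 1 \<Longrightarrow>
        (1 - t) * h0 u + t * h0 v + \<sigma> / 2 * (t * (1 - t)) * (norm (u - v))\<^sup>2 \<le> h0 ((1 - t) *\<^sub>R u + t *\<^sub>R v)"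
    and lip: "\<And>u v. u \<in> Y \<Longrightarrow> v \<in> Y \<Longrightarrow> \<phi> u - \<phi> v \<le> L * norm (u - v)"
    and sig: "\<sigma> > 0" and L: "L \<ge> 0"
  shows "\<sigma> * norm (y1 - y0) \<le> L"
proof (cases "y1 = y0")
  case True then show ?thesis using L by simp
next
  case False
  define d where "d = norm (y1 - y0)"
  have d: "d > 0" using False by (simp add: d_def)
  have nd: "norm (y0 - y1) = d" by (simp add: d_def norm_minus_commute)
  have A: "\<sigma> / 2 * d\<^sup>2 \<le> h0 y0 - h0 y1"
  proof (rule lim_arg)
    fix s :: real assume s: "0 < s" "s \<le> 1"
    have "(1 - s) *\<^sub>R y0 + s *\<^sub>R y1 \<in> Y" using Y y0 y1 s by (simp add: convex_alt)
    then have "h0 ((1 - s) *\<^sub>R y0 + s *\<^sub>R y1) \<le> h0 y0" by (rule opt0)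
    with strong[OF y0 y1, of s] s nd
    have "(1 - s) * h0 y0 + s * h0 y1 + \<sigma> / 2 * (s * (1 - s)) * d\<^sup>2 \<le> h0 y0" by simp
    then have "s * (\<sigma> / 2 * d\<^sup>2 * (1 - s)) \<le> s * (h0 y0 - h0 y1)" by (simp add: algebra_simps)
    then show "\<sigma> / 2 * d\<^sup>2 * (1 - s) \<le> h0 y0 - h0 y1" using s by simp
  qed
  have "\<sigma> * d \<le> L"
  proof (rule lim_arg)
    fix t :: real assume t: "0 < t" "t \<le> 1"
    define yt where "yt = (1 - t) *\<^sub>R y1 + t *\<^sub>R y0"
    have ytY: "yt \<in> Y" using Y y0 y1 t by (simp add: convex_alt yt_def)
    have "y1 - yt = t *\<^sub>R (y1 - y0)" by (simp add: yt_def algebra_simps)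
    then have nyt: "norm (y1 - yt) = t * d" using t by (simp add: d_def)
    have s1: "(1 - t) * h0 y1 + t * h0 y0 + \<sigma> / 2 * (t * (1 - t)) * d\<^sup>2 \<le> h0 yt"
      using strong[OF y1 y0, of t] t by (simp add: yt_def d_def)
    have s2: "h0 yt + \<phi> yt \<le> h0 y1 + \<phi> y1" using opt1[OF ytY] .
    have s3: "\<phi> y1 - \<phi> yt \<le> L * (t * d)" using lip[OF y1 ytY] nyt by simp
    have "t * (h0 y0 - h0 y1) + \<sigma> / 2 * (t * (1 - t)) * d\<^sup>2 \<le> t * (L * d)"
      using s1 s2 s3 by (simp add: algebra_simps)
    then have "t * ((h0 y0 - h0 y1) + \<sigma> / 2 * (1 - t) * d\<^sup>2) \<le> t * (L * d)"
      by (simp add: algebra_simps)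
    then have "(h0 y0 - h0 y1) + \<sigma> / 2 * (1 - t) * d\<^sup>2 \<le> L * d"
      using t by (simp add: mult_le_cancel_left_pos)
    with A have "\<sigma> / 2 * d\<^sup>2 + \<sigma> / 2 * (1 - t) * d\<^sup>2 \<le> L * d" by simp
    moreover have "\<sigma> / 2 * d\<^sup>2 + \<sigma> / 2 * (1 - t) * d\<^sup>2 = d * (\<sigma> / 2 * (2 - t) * d)"
      by (simp add: power2_eq_square field_simps)
    ultimately have "d * (\<sigma> / 2 * (2 - t) * d) \<le> d * L" by (simp add: mult.commute)
    then have "\<sigma> / 2 * (2 - t) * d \<le> L" using d by simp
    moreover have "\<sigma> * d * (1 - t) \<le> \<sigma> / 2 * (2 - t) * d" using sig d t
      by (simp add: algebra_simps)
    ultimately show "\<sigma> * d * (1 - t) \<le> L" by simp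
  qed
  then show ?thesis by (simp add: d_def)
qed

lemma normsq_pos: "(norm (pos_part (v::real^'p)))\<^sup>2 = (\<Sum>i\<in>UNIV. (max (v $ i) 0)\<^sup>2)"
  unfolding norm_vec_def L2_set_def pos_part_def by (simp add: sum_nonneg)

lemma pos_part_lip: "norm (pos_part u - pos_part (v::real^'p)) \<le> norm (u - v)"
  by (rule norm_le_componentwise_cart) (auto simp: pos_part_def)

lemma pos_part_le: "norm (pos_part (u::real^'p)) \<le> norm u"
  by (rule norm_le_componentwise_cart) (auto simp: pos_part_def)

lemma sq_diff_bound:
  fixes a b :: "'a::real_normed_vector"
  assumes "norm a \<le> M" "norm b \<le> M"
  shows "\<bar>(norm a)\<^sup>2 - (norm b)\<^sup>2\<bar> \<le> 2 * M * norm (a - b)"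
proof -
  have "(norm a)\<^sup>2 - (norm b)\<^sup>2 = (norm a - norm b) * (norm a + norm b)"
    by (simp add: power2_eq_square algebra_simps)
  then have "\<bar>(norm a)\<^sup>2 - (norm b)\<^sup>2\<bar> = \<bar>norm a - norm b\<bar> * (norm a + norm b)"
    by (simp add: abs_mult)
  also have "\<dots> \<le> norm (a - b) * (2 * M)"
    using assms norm_ge_zero[of a] by (intro mult_mono norm_triangle_ineq3) auto
  finally show ?thesis by (simp add: algebra_simps)
qed

lemma P_bound:
  fixes a b :: "real^'p"
  assumes "norm a \<le> M" "norm b \<le> M"
  shows "\<bar>(norm (pos_part a))\<^sup>2 - (norm (pos_part b))\<^sup>2\<bar> \<le> 2 * M * norm (a - b)"
proof -
  have "\<bar>(norm (pos_part a))\<^sup>2 - (norm (pos_part b))\<^sup>2\<bar> \<le> 2 * M * norm (pos_part a - pos_part b)"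
    using assms pos_part_le[of a] pos_part_le[of b] by (intro sq_diff_bound) auto
  also have "\<dots> \<le> 2 * M * norm (a - b)"
    using assms(1) norm_ge_zero[of a] by (intro mult_left_mono pos_part_lip) linarith
  finally show ?thesis .
qed

lemma norm_sq_convex_id:
  fixes u v :: "'a::real_inner"
  shows "(norm ((1 - t) *\<^sub>R u + t *\<^sub>R v))\<^sup>2 = (1 - t) * (norm u)\<^sup>2 + t * (norm v)\<^sup>2 - t * (1 - t) * (norm (u - v))\<^sup>2"
  unfolding power2_norm_eq_inner
  by (simp add: inner_add_left inner_add_right inner_diff_left inner_diff_right inner_commute[of v u] algebra_simps)

lemma partial_deriv:
  assumes "(g has_derivative G) (at (x, y))"
  shows "((\<lambda>y. g (x, y)) has_derivative (\<lambda>h. G (0, h))) (at y)"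
proof -
  have "((\<lambda>y. (x, y)) has_derivative (\<lambda>h. (0, h))) (at y)"
    by (auto intro!: derivative_eq_intros)
  from has_derivative_compose[OF this assms] show ?thesis by simp
qed

lemma sq_convex:
  fixes a b t :: real
  assumes "0 \<le> q" "q \<le> (1 - t) * a + t * b" "0 \<le> t" "t \<le> 1"
  shows "q\<^sup>2 \<le> (1 - t) * a\<^sup>2 + t * b\<^sup>2"
proof -
  have "q\<^sup>2 \<le> ((1 - t) * a + t * b)\<^sup>2" using assms by (intro power_mono) auto
  also have "\<dots> = (1 - t) * a\<^sup>2 + t * b\<^sup>2 - t * (1 - t) * (a - b)\<^sup>2"
    by (simp add: power2_eq_square algebra_simps)
  also have "\<dots> \<le> (1 - t) * a\<^sup>2 + t * b\<^sup>2" using assms by simp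
  finally show ?thesis .
qed

lemma P_convex:
  fixes c :: "real^'n \<Rightarrow> real^'m \<Rightarrow> real^'p"
  assumes cc: "\<And>i. convex_on Y (\<lambda>y. c x y $ i)"
    and u: "u \<in> Y" and v: "v \<in> Y" and t: "0 \<le> t" "t \<le> 1"
  shows "(norm (pos_part (c x ((1 - t) *\<^sub>R u + t *\<^sub>R v))))\<^sup>2
     \<le> (1 - t) * (norm (pos_part (c x u)))\<^sup>2 + t * (norm (pos_part (c x v)))\<^sup>2"
proof -
  have "\<And>i. (max (c x ((1 - t) *\<^sub>R u + t *\<^sub>R v) $ i) 0)\<^sup>2
      \<le> (1 - t) * (max (c x u $ i) 0)\<^sup>2 + t * (max (c x v $ i) 0)\<^sup>2"
  proof -
    fix i
    have "c x ((1 - t) *\<^sub>R u + t *\<^sub>R v) $ i \<le> (1 - t) * c x u $ i + t * c x v $ i"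
      using convex_onD[OF cc[of i]] t u v by blast
    moreover have "(1 - t) * c x u $ i + t * c x v $ i \<le> (1 - t) * max (c x u $ i) 0 + t * max (c x v $ i) 0"
      using t by (intro add_mono mult_left_mono) auto
    moreover have "0 \<le> (1 - t) * max (c x u $ i) 0 + t * max (c x v $ i) 0" using t by simp
    ultimately show "?thesis i" using t by (intro sq_convex) auto
  qed
  then have "(\<Sum>i\<in>UNIV. (max (c x ((1 - t) *\<^sub>R u + t *\<^sub>R v) $ i) 0)\<^sup>2)
      \<le> (\<Sum>i\<in>UNIV. (1 - t) * (max (c x u $ i) 0)\<^sup>2 + t * (max (c x v $ i) 0)\<^sup>2)"
    by (rule sum_mono)
  then show ?thesis by (simp add: normsq_pos sum.distrib sum_distrib_left)
qed

lemma psi_strong: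
  fixes c :: "real^'n \<Rightarrow> real^'m \<Rightarrow> real^'p"
  assumes fc: "concave_on Y (f x)" and cc: "\<And>i. convex_on Y (\<lambda>y. c x y $ i)"
    and u: "u \<in> Y" and v: "v \<in> Y" and t: "0 \<le> t" "t \<le> 1" and rho: "\<rho> \<ge> 0"
  shows "(1 - t) * psi f c \<rho> \<sigma> x u + t * psi f c \<rho> \<sigma> x v + \<sigma> / 2 * (t * (1 - t)) * (norm (u - v))\<^sup>2
     \<le> psi f c \<rho> \<sigma> x ((1 - t) *\<^sub>R u + t *\<^sub>R v)"
proof -
  have F: "(1 - t) * f x u + t * f x v \<le> f x ((1 - t) *\<^sub>R u + t *\<^sub>R v)"
    using concave_onD[OF fc] t u v by blast
  have P: "\<rho> / 2 * (norm (pos_part (c x ((1 - t) *\<^sub>R u + t *\<^sub>R v))))\<^sup>2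
     \<le> \<rho> / 2 * ((1 - t) * (norm (pos_part (c x u)))\<^sup>2 + t * (norm (pos_part (c x v)))\<^sup>2)"
    using rho P_convex[where Y=Y and c=c and x=x and u=u and v=v and t=t] cc u v t
    by (intro mult_left_mono) auto
  have E: "(1 - t) * psi f c \<rho> \<sigma> x u + t * psi f c \<rho> \<sigma> x v + \<sigma> / 2 * (t * (1 - t)) * (norm (u - v))\<^sup>2
     - psi f c \<rho> \<sigma> x ((1 - t) *\<^sub>R u + t *\<^sub>R v)
     = ((1 - t) * f x u + t * f x v - f x ((1 - t) *\<^sub>R u + t *\<^sub>R v))
       + (\<rho> / 2 * (norm (pos_part (c x ((1 - t) *\<^sub>R u + t *\<^sub>R v))))\<^sup>2
          - \<rho> / 2 * ((1 - t) * (norm (pos_part (c x u)))\<^sup>2 + t * (norm (pos_part (c x v)))\<^sup>2))"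
    unfolding psi_def norm_sq_convex_id by (simp add: field_simps)
  show ?thesis using F P E by linarith
qed

lemma unique_max:
  fixes h :: "'a::real_normed_vector \<Rightarrow> real"
  assumes Y: "compact Y" "Y \<noteq> {}" "convex Y" and hc: "continuous_on Y h"
    and strong: "\<And>u v t. u \<in> Y \<Longrightarrow> v \<in> Y \<Longrightarrow> 0 \<le> t \<Longrightarrow> t \<le> 1 \<Longrightarrow>
        (1 - t) * h u + t * h v + \<sigma> / 2 * (t * (1 - t)) * (norm (u - v))\<^sup>2 \<le> h ((1 - t) *\<^sub>R u + t *\<^sub>R v)"
    and sig: "\<sigma> > 0"
  shows "\<exists>!y. y \<in> Y \<and> (\<forall>z\<in>Y. h z \<le> h y)"
proof -
  obtain y where y: "y \<in> Y" "\<forall>z\<in>Y. h z \<le> h y" using continuous_attains_sup[OF Y(1,2) hc] by blast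
  show ?thesis
  proof (rule ex1I[of _ y])
    show "y \<in> Y \<and> (\<forall>z\<in>Y. h z \<le> h y)" using y by blast
  next
    fix w assume w: "w \<in> Y \<and> (\<forall>z\<in>Y. h z \<le> h w)"
    then have eq: "h w = h y" using y by (meson order_antisym)
    have mY: "(1 - 1/2) *\<^sub>R w + (1/2) *\<^sub>R y \<in> Y" using convexD[OF Y(3), of w y "1/2" "1/2"] w y by simp
    have "(1 - 1/2) * h w + (1/2) * h y + \<sigma> / 2 * ((1/2) * (1 - 1/2)) * (norm (w - y))\<^sup>2
        \<le> h ((1 - 1/2) *\<^sub>R w + (1/2) *\<^sub>R y)" using strong[of w y "1/2"] w y by simp
    also have "\<dots> \<le> h y" using y mY by blast
    finally have "\<sigma> * (norm (w - y))\<^sup>2 \<le> 0" using eq by simp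
    then have "(norm (w - y))\<^sup>2 \<le> 0" using sig by (simp add: mult_le_0_iff)
    then show "w = y" by simp
  qed
qed


theorem lemmaD3:
  fixes X :: "(real^'n) set" and Y :: "(real^'m) set"
    and f :: "real^'n \<Rightarrow> real^'m \<Rightarrow> real"
    and c :: "real^'n \<Rightarrow> real^'m \<Rightarrow> real^'p"
    and Df :: "(real^'n) \<times> (real^'m) \<Rightarrow> ((real^'n) \<times> (real^'m)) \<Rightarrow>\<^sub>L real"
    and Dc :: "(real^'n) \<times> (real^'m) \<Rightarrow> ((real^'n) \<times> (real^'m)) \<Rightarrow>\<^sub>L (real^'p)"
    and U :: "((real^'n) \<times> (real^'m)) set"
    and \<rho> \<sigma> :: "nat \<Rightarrow> real" and k :: nat and M :: real and x :: "real^'n"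
  assumes X: "X \<noteq> {}" "convex X" "compact X"
    and Y: "Y \<noteq> {}" "convex Y" "compact Y"
    and U: "open U" "X \<times> Y \<subseteq> U"
    and f_deriv: "\<And>z. z \<in> U \<Longrightarrow> ((\<lambda>z. f (fst z) (snd z)) has_derivative blinfun_apply (Df z)) (at z)"
    and f_C1: "continuous_on U Df"
    and f_lip: "\<exists>L. \<forall>z\<in>X \<times> Y. \<forall>w\<in>X \<times> Y. norm (Df z - Df w) \<le> L * dist z w"
    and f_concave: "\<And>x. x \<in> X \<Longrightarrow> concave_on Y (f x)"
    and c_deriv: "\<And>z. z \<in> U \<Longrightarrow> ((\<lambda>z. c (fst z) (snd z)) has_derivative blinfun_apply (Dc z)) (at z)"
    and c_C1: "continuous_on U Dc"
    and c_lip: "\<exists>L. \<forall>z\<in>X \<times> Y. \<forall>w\<in>X \<times> Y. norm (Dc z - Dc w) \<le> L * dist z w"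
    and c_convex: "\<And>x i. x \<in> X \<Longrightarrow> convex_on Y (\<lambda>y. c x y $ i)"
    and M_c: "\<And>x y. x \<in> X \<Longrightarrow> y \<in> Y \<Longrightarrow> norm (c x y) \<le> M"
    and M_Dc: "\<And>x y. x \<in> X \<Longrightarrow> y \<in> Y \<Longrightarrow> norm (Dc (x, y)) \<le> M"
    and M_y: "\<And>y. y \<in> Y \<Longrightarrow> norm y \<le> M"
    and rho: "\<rho> (Suc k) \<ge> \<rho> k" "\<rho> k > 0"
    and sigma: "\<sigma> k \<ge> \<sigma> (Suc k)" "\<sigma> (Suc k) > 0"
    and xX: "x \<in> X"
  shows "norm (ystar Y f c (\<rho> (Suc k)) (\<sigma> (Suc k)) x - ystar Y f c (\<rho> k) (\<sigma> k) x)
           \<le> (\<rho> (Suc k) - \<rho> k) / \<sigma> k * M\<^sup>2 + (\<sigma> k - \<sigma> (Suc k)) / \<sigma> k * M"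
proof -
  define \<rho>0 \<rho>1 \<sigma>0 \<sigma>1 where "\<rho>0 = \<rho> k" "\<rho>1 = \<rho> (Suc k)" "\<sigma>0 = \<sigma> k" "\<sigma>1 = \<sigma> (Suc k)"
  have M0: "M \<ge> 0" using Y(1) M_y norm_ge_zero by (meson ex_in_conv order_trans)
  have inU: "(x, y) \<in> U" if "y \<in> Y" for y using U(2) xX that by blast
  have fd: "((\<lambda>y. f x y) has_derivative (\<lambda>h. Df (x, y) (0, h))) (at y)" if "y \<in> Y" for y
    using partial_deriv[OF f_deriv[OF inU[OF that]]] by simp
  have cd: "((\<lambda>y. c x y) has_derivative (\<lambda>h. Dc (x, y) (0, h))) (at y)" if "y \<in> Y" for y
    using partial_deriv[OF c_deriv[OF inU[OF that]]] by simp
  have fcont: "continuous_on Y (\<lambda>y. f x y)"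
    using fd by (intro continuous_at_imp_continuous_on) (blast intro: has_derivative_continuous)
  have ccont: "continuous_on Y (\<lambda>y. c x y)"
    using cd by (intro continuous_at_imp_continuous_on) (blast intro: has_derivative_continuous)
  have clip: "norm (c x u - c x v) \<le> M * norm (u - v)" if "u \<in> Y" "v \<in> Y" for u v
  proof (rule differentiable_bound[OF Y(2) _ _ that])
    fix y assume "y \<in> Y"
    then show "((\<lambda>y. c x y) has_derivative (\<lambda>h. Dc (x, y) (0, h))) (at y within Y)"
      using cd has_derivative_at_withinI by blast
    show "onorm (\<lambda>h. Dc (x, y) (0, h)) \<le> M"
    proof (rule onorm_le)
      fix h :: "real^'m"
      have "norm (Dc (x, y) (0, h)) \<le> norm (Dc (x, y)) * norm ((0::real^'n), h)" by (rule norm_blinfun)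
      also have "\<dots> \<le> M * norm h" using M_Dc[OF xX \<open>y \<in> Y\<close>] by (simp add: norm_Pair mult_right_mono)
      finally show "norm (Dc (x, y) (0, h)) \<le> M * norm h" .
    qed
  qed
  have Pb: "\<bar>(norm (pos_part (c x u)))\<^sup>2 - (norm (pos_part (c x v)))\<^sup>2\<bar> \<le> 2 * M * (M * norm (u - v))"
    if "u \<in> Y" "v \<in> Y" for u v
  proof -
    have "\<bar>(norm (pos_part (c x u)))\<^sup>2 - (norm (pos_part (c x v)))\<^sup>2\<bar> \<le> 2 * M * norm (c x u - c x v)"
      using M_c xX that by (intro P_bound) auto
    also have "\<dots> \<le> 2 * M * (M * norm (u - v))" using M0 clip[OF that] by (intro mult_left_mono) auto
    finally show ?thesis .
  qed
  have Nb: "\<bar>(norm u)\<^sup>2 - (norm v)\<^sup>2\<bar> \<le> 2 * M * norm (u - v)" if "u \<in> Y" "v \<in> Y" for u v :: "real^'m"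
    using M_y that by (intro sq_diff_bound) auto
  have psic: "continuous_on Y (psi f c r s x)" for r s
  proof -
    have "psi f c r s x = (\<lambda>y. f x y - r / 2 * (\<Sum>i\<in>UNIV. (max (c x y $ i) 0)\<^sup>2) - s / 2 * (norm y)\<^sup>2)"
      by (simp add: psi_def normsq_pos fun_eq_iff)
    moreover have "continuous_on Y (\<lambda>y. f x y - r / 2 * (\<Sum>i\<in>UNIV. (max (c x y $ i) 0)\<^sup>2) - s / 2 * (norm y)\<^sup>2)"
      using fcont ccont by (intro continuous_intros) auto
    ultimately show ?thesis by simp
  qed
  have strong: "(1 - t) * psi f c r s x u + t * psi f c r s x v + s / 2 * (t * (1 - t)) * (norm (u - v))\<^sup>2
     \<le> psi f c r s x ((1 - t) *\<^sub>R u + t *\<^sub>R v)"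
    if "r \<ge> 0" "u \<in> Y" "v \<in> Y" "0 \<le> t" "t \<le> 1" for r s t u v
    by (rule psi_strong[where c=c and x=x and f=f and Y=Y]) (use f_concave[OF xX] c_convex[OF xX] that in auto)
  have spec: "ystar Y f c r s x \<in> Y \<and> (\<forall>z\<in>Y. psi f c r s x z \<le> psi f c r s x (ystar Y f c r s x))"
    if "r \<ge> 0" "s > 0" for r s
  proof -
    have "\<exists>!y. y \<in> Y \<and> (\<forall>z\<in>Y. psi f c r s x z \<le> psi f c r s x y)"
      by (rule unique_max[OF Y(3,1,2) psic[of r s] strong[OF that(1)] that(2)])
    then show ?thesis unfolding ystar_def by (rule theI')
  qed
  define y0 y1 where "y0 = ystar Y f c \<rho>0 \<sigma>0 x" "y1 = ystar Y f c \<rho>1 \<sigma>1 x"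
  have s0: "y0 \<in> Y" "\<And>z. z \<in> Y \<Longrightarrow> psi f c \<rho>0 \<sigma>0 x z \<le> psi f c \<rho>0 \<sigma>0 x y0"
    using spec[of \<rho>0 \<sigma>0] rho sigma unfolding y0_y1_def \<rho>0_\<rho>1_\<sigma>0_\<sigma>1_def by auto
  have s1: "y1 \<in> Y" "\<And>z. z \<in> Y \<Longrightarrow> psi f c \<rho>1 \<sigma>1 x z \<le> psi f c \<rho>1 \<sigma>1 x y1"
    using spec[of \<rho>1 \<sigma>1] rho sigma unfolding y0_y1_def \<rho>0_\<rho>1_\<sigma>0_\<sigma>1_def by auto
  define L where "L = (\<rho>1 - \<rho>0) * M\<^sup>2 + (\<sigma>0 - \<sigma>1) * M"
  define \<phi> where "\<phi> = (\<lambda>y. psi f c \<rho>1 \<sigma>1 x y - psi f c \<rho>0 \<sigma>0 x y)"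
  have drho: "\<rho>1 - \<rho>0 \<ge> 0" "\<sigma>0 - \<sigma>1 \<ge> 0" "\<sigma>0 > 0" "\<rho>0 \<ge> 0"
    using rho sigma unfolding \<rho>0_\<rho>1_\<sigma>0_\<sigma>1_def by auto
  have lip: "\<phi> u - \<phi> v \<le> L * norm (u - v)" if "u \<in> Y" "v \<in> Y" for u v
  proof -
    have e: "\<phi> u - \<phi> v = (\<rho>1 - \<rho>0) / 2 * ((norm (pos_part (c x v)))\<^sup>2 - (norm (pos_part (c x u)))\<^sup>2)
        + (\<sigma>0 - \<sigma>1) / 2 * ((norm u)\<^sup>2 - (norm v)\<^sup>2)"
      unfolding \<phi>_def psi_def by (simp add: field_simps)
    have a: "(\<rho>1 - \<rho>0) / 2 * ((norm (pos_part (c x v)))\<^sup>2 - (norm (pos_part (c x u)))\<^sup>2)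
        \<le> (\<rho>1 - \<rho>0) / 2 * (2 * M * (M * norm (u - v)))"
      using Pb[OF that(2,1)] drho(1) norm_minus_commute[of u v] by (intro mult_left_mono) auto
    have b: "(\<sigma>0 - \<sigma>1) / 2 * ((norm u)\<^sup>2 - (norm v)\<^sup>2) \<le> (\<sigma>0 - \<sigma>1) / 2 * (2 * M * norm (u - v))"
      using Nb[OF that] drho(2) by (intro mult_left_mono) auto
    have "(\<rho>1 - \<rho>0) / 2 * (2 * M * (M * norm (u - v))) + (\<sigma>0 - \<sigma>1) / 2 * (2 * M * norm (u - v))
       = L * norm (u - v)" by (simp add: L_def power2_eq_square field_simps)
    then show ?thesis using e a b by linarith
  qed
  have L0: "L \<ge> 0" using drho M0 by (simp add: L_def)
  have o1: "\<And>z. z \<in> Y \<Longrightarrow> psi f c \<rho>0 \<sigma>0 x z + \<phi> z \<le> psi f c \<rho>0 \<sigma>0 x y1 + \<phi> y1"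
    using s1(2) by (simp add: \<phi>_def)
  have st0: "\<And>u v t. u \<in> Y \<Longrightarrow> v \<in> Y \<Longrightarrow> 0 \<le> t \<Longrightarrow> t \<le> 1 \<Longrightarrow>
        (1 - t) * psi f c \<rho>0 \<sigma>0 x u + t * psi f c \<rho>0 \<sigma>0 x v + \<sigma>0 / 2 * (t * (1 - t)) * (norm (u - v))\<^sup>2
        \<le> psi f c \<rho>0 \<sigma>0 x ((1 - t) *\<^sub>R u + t *\<^sub>R v)"
    using strong[OF drho(4)] by blast
  have "\<sigma>0 * norm (y1 - y0) \<le> L"
    by (rule abstract_bound[OF Y(2) s0(1) s1(1) s0(2) o1 st0 lip drho(3) L0])
  then have "norm (y1 - y0) \<le> L / \<sigma>0" using drho(3) by (simp add: field_simps)
  also have "L / \<sigma>0 = (\<rho>1 - \<rho>0) / \<sigma>0 * M\<^sup>2 + (\<sigma>0 - \<sigma>1) / \<sigma>0 * M"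
    by (simp add: L_def add_divide_distrib)
  finally show ?thesis unfolding y0_y1_def \<rho>0_\<rho>1_\<sigma>0_\<sigma>1_def .
qed

end
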